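(* Let $\mathcal{O}$ be a small category, let $n\ge 0$, and let $\sigma\colon\Delta[n]\to N\mathcal{O}$ correspond to the sequence $\sigma_0\xrightarrow{g_1}\sigma_1\to\cdots\xrightarrow{g_n}\sigma_n$ in $\mathcal{O}$. Let $A\subset\Delta[n]$ be a simplicial subset containing the face opposite the vertex $0$, and let $\lambda$ be the composite $A\hookrightarrow\Delta[n]\xrightarrow{\sigma}N\mathcal{O}$. Then the square of contravariant functors $\mathcal{O}\to\mathcal{S}$ $$\begin{array}{ccc}\mathcal{O}(-,\sigma_0)\times A & \longrightarrow & F\lambda\\ \downarrow & & \downarrow\\ \mathcal{O}(-,\sigma_0)\times\Delta[n] & \xrightarrow{\iota_n} & F\sigma\end{array}$$ is a pushout, where the top map is the restriction of $\iota_n$, the left map is induced by the inclusion $A\subset\Delta[n]$, and the right map is induced by the inclusion $A\subset \Delta[n]$ over $N\mathcal{O}$.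
   Context: $\mathcal{S}$ is the category of simplicial sets, $N$ the nerve, $\Delta[n]$ the standard $n$-simplex (nerve of the poset $[n]=\{0<\dots<n\}$), $\mathcal{O}(b,c)$ the hom-set of $\mathcal{O}$ and $\mathcal{O}(-,c)$ the representable contravariant set-valued functor (viewed as a discrete simplicial-set-valued functor). For $\phi\colon X\to N\mathcal{O}$ a simplicial set over $N\mathcal{O}$, $F\phi$ is the contravariant functor $\mathcal{O}\to\mathcal{S}$ with $(F\phi)(b)$ the pullback of $X\xrightarrow{\phi}N\mathcal{O}\leftarrow N(b{\downarrow}\mathcal{O})$ (where $b{\downarrow}\mathcal{O}$ is the category of objects under $b$ and the map is the forgetful one), functorial in $b$ via the functors $c{\downarrow}\mathcal{O}\to b{\downarrow}\mathcal{O}$ given by precomposition with $\beta\colon b\to c$. A $k$-simplex of $(F\sigma)(b)$ is thus a pair $(\alpha,\omega)$ with $\alpha\colon[k]\to[n]$ order-preserving and $\omega=(b\to\sigma\alpha(0)\to\sigma\alpha(1)\to\cdots\to\sigma\alpha(k))$ a $k$-simplex of $N(b{\downarrow}\mathcal{O})$ whose maps after the first are $\sigma\alpha(i-1\to i)$. The map $\iota_n\colon\mathcal{O}(-,\sigma_0)\times\Delta[n]\to F\sigma$ sends $(g,\alpha)\in\mathcal{O}(b,\sigma_0)\times\Delta[n]_k$ to $(\alpha,\omega)$ with $\omega=(b\xrightarrow{\sigma(0\to\alpha(0))\circ g}\sigma\alpha(0)\xrightarrow{\sigma\alpha(0\to1)}\cdots\xrightarrow{\sigma\alpha(k-1\to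 k)}\sigma\alpha(k))$. *)

theory Defs
  imports Main
begin

record ('o, 'm) category =
  Ob  :: "'o set"
  Ar  :: "'m set"
  Dom :: "'m \<Rightarrow> 'o"
  Cod :: "'m \<Rightarrow> 'o"
  Comp :: "'m \<Rightarrow> 'm \<Rightarrow> 'm"   (* Comp C g f = g o f *)
  Idm :: "'o \<Rightarrow> 'm"

definition hom :: "('o, 'm) category \<Rightarrow> 'o \<Rightarrow> 'o \<Rightarrow> 'm set" where
  "hom C b c = {f \<in> Ar C. Dom C f = b \<and> Cod C f = c}"

definition is_category :: "('o, 'm) category \<Rightarrow> bool" where
  "is_category C \<longleftrightarrow>
     (\<forall>f\<in>Ar C. Dom C f \<in> Ob C \<and> Cod C f \<in> Ob C) \<and>
     (\<forall>c\<in>Ob C. Idm C c \<in> hom C c c) \<and>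
     (\<forall>f\<in>Ar C. \<forall>g\<in>Ar C. Cod C f = Dom C g \<longrightarrow> Comp C g f \<in> hom C (Dom C f) (Cod C g)) \<and>
     (\<forall>f\<in>Ar C. Comp C (Idm C (Cod C f)) f = f \<and> Comp C f (Idm C (Dom C f)) = f) \<and>
     (\<forall>f\<in>Ar C. \<forall>g\<in>Ar C. \<forall>h\<in>Ar C. Cod C f = Dom C g \<and> Cod C g = Dom C h \<longrightarrow>
        Comp C h (Comp C g f) = Comp C (Comp C h g) f)"

text \<open>A k-simplex of Delta[n] (an order preserving map [k] -> [n]) is represented
  as the list of its values, of length k+1, sorted, entries at most n.\<close>

definition delta :: "nat \<Rightarrow> nat \<Rightarrow> nat list set" where
  "delta n k = {xs. length xs = Suc k \<and> sorted xs \<and> (\<forall>x\<in>set xs. x \<le> n)}"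

definition delta_all :: "nat \<Rightarrow> nat list set" where
  "delta_all n = (\<Union>k. delta n k)"

definition simplicial_subset :: "nat \<Rightarrow> nat list set \<Rightarrow> bool" where
  "simplicial_subset n A \<longleftrightarrow> A \<subseteq> delta_all n \<and>
     (\<forall>xs\<in>A. \<forall>m. \<forall>\<theta>\<in>delta (length xs - 1) m. map (\<lambda>i. xs ! i) \<theta> \<in> A)"

definition face0 :: "nat \<Rightarrow> nat list set" where
  "face0 n = {xs \<in> delta_all n. \<forall>x\<in>set xs. 1 \<le> x}"

text \<open>sigma(i -> j) for i <= j: the composite g_j o ... o g_(i+1) (identity if i = j).\<close>
fun chain :: "('o, 'm) category \<Rightarrow> (nat \<Rightarrow> 'o) \<Rightarrow> (nat \<Rightarrow> 'm) \<Rightarrow> nat \<Rightarrow> nat \<Rightarrow> 'm" where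
  "chain C s g i 0 = Idm C (s i)"
| "chain C s g i (Suc j) =
     (if Suc j \<le> i then Idm C (s i) else Comp C (g (Suc j)) (chain C s g i j))"

text \<open>k-simplices of (F phi)(b), for phi the composite S \<subseteq> Delta[n] -> N O given by sigma:
  pairs (alpha, omega) with alpha a k-simplex of S and omega the k-simplex
  b -> sigma alpha(0) -> ... -> sigma alpha(k) of N(b under O), encoded as the list
  of its k+1 morphisms.\<close>
definition Fset :: "('o, 'm) category \<Rightarrow> (nat \<Rightarrow> 'o) \<Rightarrow> (nat \<Rightarrow> 'm) \<Rightarrow> nat list set
    \<Rightarrow> 'o \<Rightarrow> nat \<Rightarrow> (nat list \<times> 'm list) set" where
  "Fset C s g S b k = {(\<alpha>, \<omega>). \<alpha> \<in> S \<and> length \<alpha> = Suc k \<and> length \<omega> = Suc k \<and>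
      \<omega> ! 0 \<in> hom C b (s (\<alpha> ! 0)) \<and>
      (\<forall>i. 1 \<le> i \<and> i \<le> k \<longrightarrow> \<omega> ! i = chain C s g (\<alpha> ! (i - 1)) (\<alpha> ! i))}"

definition iota :: "('o, 'm) category \<Rightarrow> (nat \<Rightarrow> 'o) \<Rightarrow> (nat \<Rightarrow> 'm)
    \<Rightarrow> 'm \<times> nat list \<Rightarrow> nat list \<times> 'm list" where
  "iota C s g p = (case p of (h, \<alpha>) \<Rightarrow>
     (\<alpha>, Comp C (chain C s g 0 (\<alpha> ! 0)) h #
          map (\<lambda>i. chain C s g (\<alpha> ! (i - 1)) (\<alpha> ! i)) [1..<length \<alpha>]))"

text \<open>The square P --f2--> R, P --f1--> Q, Q --g1--> T, R --g2--> T is a pushout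
  in the category of sets: maps are well-typed, it commutes, and it has the universal
  property against every set Z (of an arbitrary type 'z).\<close>
definition is_pushout_set :: "'z itself \<Rightarrow> 'p set \<Rightarrow> 'q set \<Rightarrow> 'r set \<Rightarrow> 't set
    \<Rightarrow> ('p \<Rightarrow> 'q) \<Rightarrow> ('p \<Rightarrow> 'r) \<Rightarrow> ('q \<Rightarrow> 't) \<Rightarrow> ('r \<Rightarrow> 't) \<Rightarrow> bool" where
  "is_pushout_set _ P Q R T f1 f2 g1 g2 \<longleftrightarrow>
     (\<forall>x\<in>P. f1 x \<in> Q \<and> f2 x \<in> R) \<and> (\<forall>y\<in>Q. g1 y \<in> T) \<and> (\<forall>y\<in>R. g2 y \<in> T) \<and>
     (\<forall>x\<in>P. g1 (f1 x) = g2 (f2 x)) \<and>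
     (\<forall>(Z::'z set) u v. (\<forall>y\<in>Q. u y \<in> Z) \<and> (\<forall>y\<in>R. v y \<in> Z) \<and> (\<forall>x\<in>P. u (f1 x) = v (f2 x))
        \<longrightarrow> (\<exists>w. (\<forall>t\<in>T. w t \<in> Z) \<and> (\<forall>y\<in>Q. w (g1 y) = u y) \<and> (\<forall>y\<in>R. w (g2 y) = v y) \<and>
               (\<forall>w'. (\<forall>y\<in>Q. w' (g1 y) = u y) \<and> (\<forall>y\<in>R. w' (g2 y) = v y)
                      \<longrightarrow> (\<forall>t\<in>T. w' t = w t))))"

end

theory Submission
  imports Defs
begin

lemma chain_hom:
  assumes C: "is_category C"
    and s: "\<forall>i\<le>n. s i \<in> Ob C"
    and g: "\<forall>i. 1 \<le> i \<and> i \<le> n \<longrightarrow> g i \<in> hom C (s (i - 1)) (s i)"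
  shows "i \<le> j \<Longrightarrow> j \<le> n \<Longrightarrow> chain C s g i j \<in> hom C (s i) (s j)"
proof (induction j)
  case 0
  then show ?case using C s unfolding is_category_def by auto
next
  case (Suc j)
  show ?case
  proof (cases "Suc j \<le> i")
    case True
    then have "i = Suc j" using Suc by auto
    then show ?thesis using C s Suc unfolding is_category_def by auto
  next
    case False
    then have ij: "i \<le> j" by auto
    have h1: "chain C s g i j \<in> hom C (s i) (s j)" using Suc ij by auto
    have h2: "g (Suc j) \<in> hom C (s j) (s (Suc j))" using g Suc by auto
    have "Comp C (g (Suc j)) (chain C s g i j) \<in> hom C (s i) (s (Suc j))"
      using C h1 h2 unfolding is_category_def hom_def by force
    then show ?thesis using False by simp
  qed
qed

lemma iota_in:
  assumes C: "is_category C"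
    and s: "\<forall>i\<le>n. s i \<in> Ob C"
    and g: "\<forall>i. 1 \<le> i \<and> i \<le> n \<longrightarrow> g i \<in> hom C (s (i - 1)) (s i)"
    and h: "h \<in> hom C b (s 0)" and a: "\<alpha> \<in> delta n k" and aS: "\<alpha> \<in> S"
  shows "iota C s g (h, \<alpha>) \<in> Fset C s g S b k"
proof -
  have len: "length \<alpha> = Suc k" and le: "\<forall>x\<in>set \<alpha>. x \<le> n" using a unfolding delta_def by auto
  have a0: "\<alpha> ! 0 \<le> n" using le len by auto
  have ch: "chain C s g 0 (\<alpha> ! 0) \<in> hom C (s 0) (s (\<alpha> ! 0))"
    using chain_hom[OF C s g] a0 by auto
  have "Comp C (chain C s g 0 (\<alpha> ! 0)) h \<in> hom C b (s (\<alpha> ! 0))"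
    using C h ch unfolding is_category_def hom_def by force
  then show ?thesis using len aS unfolding Fset_def iota_def
    by (auto simp del: upt_Suc simp: nth_Cons')
qed

lemma iota_inv:
  assumes C: "is_category C"
    and t: "(\<alpha>, \<omega>) \<in> Fset C s g S b k" and a0: "\<alpha> ! 0 = 0"
  shows "iota C s g (\<omega> ! 0, \<alpha>) = (\<alpha>, \<omega>)"
proof -
  have len: "length \<alpha> = Suc k" "length \<omega> = Suc k" and h: "\<omega> ! 0 \<in> hom C b (s 0)"
    and r: "\<forall>i. 1 \<le> i \<and> i \<le> k \<longrightarrow> \<omega> ! i = chain C s g (\<alpha> ! (i - 1)) (\<alpha> ! i)"
    using t a0 unfolding Fset_def by auto
  have "Comp C (Idm C (s 0)) (\<omega> ! 0) = \<omega> ! 0"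
    using C h unfolding is_category_def hom_def by force
  then have e0: "Comp C (chain C s g 0 (\<alpha> ! 0)) (\<omega> ! 0) = \<omega> ! 0" using a0 by simp
  have "Comp C (chain C s g 0 (\<alpha> ! 0)) (\<omega> ! 0) #
          map (\<lambda>i. chain C s g (\<alpha> ! (i - 1)) (\<alpha> ! i)) [1..<length \<alpha>] = \<omega>"
  proof (rule nth_equalityI)
    show "length (Comp C (chain C s g 0 (\<alpha> ! 0)) (\<omega> ! 0) #
          map (\<lambda>i. chain C s g (\<alpha> ! (i - 1)) (\<alpha> ! i)) [1..<length \<alpha>]) = length \<omega>"
      using len by (simp del: upt_Suc)
  next
    fix i assume "i < length (Comp C (chain C s g 0 (\<alpha> ! 0)) (\<omega> ! 0) #
          map (\<lambda>i. chain C s g (\<alpha> ! (i - 1)) (\<alpha> ! i)) [1..<length \<alpha>])"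
    then have i: "i < Suc k" using len by (simp del: upt_Suc)
    show "(Comp C (chain C s g 0 (\<alpha> ! 0)) (\<omega> ! 0) #
          map (\<lambda>i. chain C s g (\<alpha> ! (i - 1)) (\<alpha> ! i)) [1..<length \<alpha>]) ! i = \<omega> ! i"
    proof (cases i)
      case 0 then show ?thesis using e0 by simp
    next
      case (Suc j)
      then show ?thesis using i len r[rule_format, of i] by (simp del: upt_Suc)
    qed
  qed
  then show ?thesis unfolding iota_def by simp
qed

lemma notA_zero:
  assumes a: "\<alpha> \<in> delta n k" and nA: "\<alpha> \<notin> A" and f: "face0 n \<subseteq> A"
  shows "\<alpha> ! 0 = 0"
proof -
  have "\<alpha> \<in> delta_all n" using a unfolding delta_all_def by auto
  then have "\<not> (\<forall>x\<in>set \<alpha>. 1 \<le> x)" using nA f unfolding face0_def by force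
  then have "\<exists>x\<in>set \<alpha>. x = 0" by (metis One_nat_def less_one not_less)
  then obtain j where j: "j < length \<alpha>" "\<alpha> ! j = 0" by (metis in_set_conv_nth)
  have "sorted \<alpha>" using a unfolding delta_def by auto
  then have "\<alpha> ! 0 \<le> \<alpha> ! j" using j sorted_nth_mono le0 by blast
  then show ?thesis using j by simp
qed

theorem lemma2p2:
  fixes C :: "('o, 'm) category" and n :: nat
    and s :: "nat \<Rightarrow> 'o" and g :: "nat \<Rightarrow> 'm" and A :: "nat list set"
  assumes "is_category C"
    and "\<forall>i\<le>n. s i \<in> Ob C"
    and "\<forall>i. 1 \<le> i \<and> i \<le> n \<longrightarrow> g i \<in> hom C (s (i - 1)) (s i)"
    and "simplicial_subset n A"
    and "face0 n \<subseteq> A"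
  shows "\<forall>b\<in>Ob C. \<forall>k. is_pushout_set TYPE('z)
            (hom C b (s 0) \<times> (A \<inter> delta n k))
            (hom C b (s 0) \<times> delta n k)
            (Fset C s g A b k)
            (Fset C s g (delta_all n) b k)
            (\<lambda>x. x) (iota C s g) (iota C s g) (\<lambda>x. x)"
proof (intro ballI allI)
  fix b k
  note C = assms(1) and s = assms(2) and g = assms(3)
  have Asub: "A \<subseteq> delta_all n" using assms(4) unfolding simplicial_subset_def by auto
  let ?P = "hom C b (s 0) \<times> (A \<inter> delta n k)"
  let ?Q = "hom C b (s 0) \<times> delta n k"
  let ?R = "Fset C s g A b k"
  let ?T = "Fset C s g (delta_all n) b k"
  have fst_iota: "\<And>h a. fst (iota C s g (h, a)) = a" unfolding iota_def by auto
  have t1: "\<forall>x\<in>?P. x \<in> ?Q \<and> iota C s g x \<in> ?R"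
    using iota_in[OF C s g] by auto
  have t2: "\<forall>y\<in>?Q. iota C s g y \<in> ?T"
  proof
    fix y assume "y \<in> ?Q"
    then show "iota C s g y \<in> ?T"
      using iota_in[OF C s g, of "fst y" b "snd y" k "delta_all n"] unfolding delta_all_def by (cases y) auto
  qed
  have t3: "\<forall>y\<in>?R. y \<in> ?T" using Asub unfolding Fset_def by auto
  have RT: "\<And>t. t \<in> ?T \<Longrightarrow> fst t \<in> A \<Longrightarrow> t \<in> ?R" unfolding Fset_def by auto
  have Tdel: "\<And>t. t \<in> ?T \<Longrightarrow> fst t \<in> delta n k"
    unfolding Fset_def delta_all_def delta_def by auto
  have Rfst: "\<And>t. t \<in> ?R \<Longrightarrow> fst t \<in> A" unfolding Fset_def by auto
  show "is_pushout_set TYPE('z) ?P ?Q ?R ?T (\<lambda>x. x) (iota C s g) (iota C s g) (\<lambda>x. x)"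
    unfolding is_pushout_set_def
  proof (intro conjI allI impI)
    show "\<forall>x\<in>?P. x \<in> ?Q \<and> iota C s g x \<in> ?R" by (rule t1)
    show "\<forall>y\<in>?Q. iota C s g y \<in> ?T" by (rule t2)
    show "\<forall>y\<in>?R. y \<in> ?T" by (rule t3)
    show "\<forall>x\<in>?P. iota C s g x = iota C s g x" by simp
  next
    fix Z :: "'z set" and u v
    assume H: "(\<forall>y\<in>?Q. u y \<in> Z) \<and> (\<forall>y\<in>?R. v y \<in> Z) \<and> (\<forall>x\<in>?P. u x = v (iota C s g x))"
    define w where "w t = (if t \<in> ?R then v t else u (snd t ! 0, fst t))" for t
    have inv: "\<And>t. t \<in> ?T \<Longrightarrow> t \<notin> ?R \<Longrightarrow> iota C s g (snd t ! 0, fst t) = t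
                 \<and> (snd t ! 0, fst t) \<in> ?Q"
    proof -
      fix t assume tT: "t \<in> ?T" and tR: "t \<notin> ?R"
      obtain \<alpha> \<omega> where t: "t = (\<alpha>, \<omega>)" by fastforce
      have ad: "\<alpha> \<in> delta n k" using Tdel tT t by auto
      have nA: "\<alpha> \<notin> A" using RT tT tR t by auto
      have a0: "\<alpha> ! 0 = 0" using notA_zero[OF ad nA assms(5)] .
      have "\<omega> ! 0 \<in> hom C b (s 0)" using tT t a0 unfolding Fset_def by auto
      then show "iota C s g (snd t ! 0, fst t) = t \<and> (snd t ! 0, fst t) \<in> ?Q"
        using iota_inv[OF C _ a0] tT t ad by auto
    qed
    show "\<exists>w. (\<forall>t\<in>?T. w t \<in> Z) \<and> (\<forall>y\<in>?Q. w (iota C s g y) = u y) \<and> (\<forall>y\<in>?R. w y = v y) \<and>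
               (\<forall>w'. (\<forall>y\<in>?Q. w' (iota C s g y) = u y) \<and> (\<forall>y\<in>?R. w' y = v y)
                      \<longrightarrow> (\<forall>t\<in>?T. w' t = w t))"
    proof (intro exI conjI ballI allI impI)
      fix t assume "t \<in> ?T"
      then show "w t \<in> Z" using H inv unfolding w_def by auto
    next
      fix y assume yQ: "y \<in> ?Q"
      obtain h \<alpha> where y: "y = (h, \<alpha>)" by fastforce
      show "w (iota C s g y) = u y"
      proof (cases "\<alpha> \<in> A")
        case True
        then have "y \<in> ?P" using yQ y by auto
        then show ?thesis using H t1 unfolding w_def by auto
      next
        case False
        have nR: "iota C s g y \<notin> ?R" using Rfst fst_iota False y by metis
        have a0: "\<alpha> ! 0 = 0" using notA_zero[of \<alpha> n k A] False yQ y assms(5) by auto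
        have h: "h \<in> hom C b (s 0)" using yQ y by auto
        have "Comp C (Idm C (s 0)) h = h"
          using C h unfolding is_category_def hom_def by force
        then have "snd (iota C s g y) ! 0 = h" using y a0 unfolding iota_def by simp
        then show ?thesis using nR y fst_iota unfolding w_def by simp
      qed
    next
      fix y assume "y \<in> ?R" then show "w y = v y" unfolding w_def by simp
    next
      fix w' t
      assume W: "(\<forall>y\<in>?Q. w' (iota C s g y) = u y) \<and> (\<forall>y\<in>?R. w' y = v y)" and tT: "t \<in> ?T"
      show "w' t = w t"
      proof (cases "t \<in> ?R")
        case True then show ?thesis using W unfolding w_def by simp
      next
        case False
        then have "iota C s g (snd t ! 0, fst t) = t \<and> (snd t ! 0, fst t) \<in> ?Q"
          using inv tT by blast
        then show ?thesis using W False unfolding w_def by metis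
      qed
    qed
  qed
qed

end
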